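(* Let $\Sigma$ be a two-letter alphabet, $\Gamma$ a finite alphabet, $h:\Sigma^*\to\Gamma^*$ an injective morphism and $w\in\Sigma^{\mathbb{N}}$ an infinite word. If there exist factors $f_1,f_2,f_3,\dots$ of $h(w)$ that are not synchronizing words of $h(\Sigma)$ and satisfy $\lim_{i\to\infty}|f_i| = \infty$, then $\mathrm{ACE}(h(w)) = \mathrm{ACE}(w) = \infty$.
   Context: For a finite set $X$ of finite words, a word $w$ is a synchronizing word of $X$ if $w = w_1w_2$ for some words $w_1,w_2$ such that for every $v\in X^*$ of the form $v = pws$, we have $pw_1\in X^*$ and $w_2s\in X^*$. $\mathrm{Fact}_n(w)$ is the set of length-$n$ factors of $w$. For a nonempty word $v$ and integer $p\ge0$, $v^{p/|v|}$ is the prefix of length $p$ of $vvv\cdots$. For a nonempty finite word $x$, $\mathrm{E}(x) = \sup\{ r \in \mathbb{Q} : x = v^r \text{ for some nonempty } v\}$. For an infinite word $w$, $\mathrm{ACE}(w) = \limsup_{n\to\infty}\sup\{\mathrm{E}(x) : x\in\mathrm{Fact}_n(w)\}$. *)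

theory Defs
  imports Complex_Main "HOL-Library.Extended_Real" "HOL-Library.Liminf_Limsup"
begin

definition wstar :: "'a list set \<Rightarrow> 'a list set" where
  "wstar X = {concat us | us. set us \<subseteq> X}"

definition morph :: "('a \<Rightarrow> 'b list) \<Rightarrow> 'a list \<Rightarrow> 'b list" where
  "morph h u = concat (map h u)"

text \<open>Image of an infinite word under a (non-erasing) morphism: the n-th letter
  of h(w) is the n-th letter of h(w_0 ... w_n).\<close>
definition morph_inf :: "('a \<Rightarrow> 'b list) \<Rightarrow> (nat \<Rightarrow> 'a) \<Rightarrow> nat \<Rightarrow> 'b" where
  "morph_inf h w n = morph h (map w [0..<Suc n]) ! n"

definition sync_word :: "'a list set \<Rightarrow> 'a list \<Rightarrow> bool" where
  "sync_word X u \<longleftrightarrow> (\<exists>w1 w2. u = w1 @ w2 \<and>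
     (\<forall>v p s. v \<in> wstar X \<and> v = p @ u @ s \<longrightarrow> p @ w1 \<in> wstar X \<and> w2 @ s \<in> wstar X))"

definition Fact :: "nat \<Rightarrow> (nat \<Rightarrow> 'a) \<Rightarrow> 'a list set" where
  "Fact n x = {map x [i..<i+n] | i. True}"

definition is_factor :: "'a list \<Rightarrow> (nat \<Rightarrow> 'a) \<Rightarrow> bool" where
  "is_factor u x \<longleftrightarrow> (\<exists>i. u = map x [i..<i + length u])"

definition is_power :: "'a list \<Rightarrow> 'a list \<Rightarrow> rat \<Rightarrow> bool" where
  "is_power x v r \<longleftrightarrow> v \<noteq> [] \<and> of_rat r * real (length v) = real (length x) \<and>
     (\<forall>i < length x. x ! i = v ! (i mod length v))"

definition Exp :: "'a list \<Rightarrow> ereal" where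
  "Exp x = Sup {ereal (of_rat r) | r. \<exists>v. is_power x v r}"

definition ACE :: "(nat \<Rightarrow> 'a) \<Rightarrow> ereal" where
  "ACE w = limsup (\<lambda>n. Sup (Exp ` Fact n w))"

end

theory Submission
  imports Defs
begin


lemma morph_simps[simp]:
  "morph h [] = []" "morph h (a#xs) = h a @ morph h xs" "morph h (xs @ ys) = morph h xs @ morph h ys"
  by (auto simp: morph_def)

lemma inj_morph_ne: "inj (morph h) \<Longrightarrow> h a \<noteq> []"
proof
  assume "inj (morph h)" "h a = []"
  then have "morph h [a] = morph h []" by simp
  with \<open>inj (morph h)\<close> show False using injD[of "morph h" "[a]" "[]"] by simp
qed

lemma len_morph_ge: assumes "\<And>a. h a \<noteq> []" shows "length xs \<le> length (morph h xs)"
proof (induction xs)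
  case (Cons a xs)
  have "1 \<le> length (h a)" using assms[of a] by (cases "h a") auto
  then show ?case using Cons by simp
qed simp

lemma len_morph_le: "(\<And>a. length (h a) \<le> M) \<Longrightarrow> length (morph h xs) \<le> M * length xs"
  by (induction xs) (auto simp: add_mono)

lemma morph_take_add: "morph h (take (j + k) xs) = morph h (take j xs) @ morph h (take k (drop j xs))"
  by (simp add: take_add)

lemma wstar_iff: "v \<in> wstar (range h) \<longleftrightarrow> (\<exists>\<eta>. v = morph h \<eta>)"
proof
  assume "v \<in> wstar (range h)"
  then obtain us where us: "v = concat us" "set us \<subseteq> range h" by (auto simp: wstar_def)
  have "\<exists>\<eta>. us = map h \<eta>" using us(2)
  proof (induction us)
    case Nil then show ?case by simp
  next
    case (Cons u us)
    then obtain \<eta> a where "us = map h \<eta>" "u = h a" by auto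
    then show ?case by (metis list.simps(9))
  qed
  then show "\<exists>\<eta>. v = morph h \<eta>" using us by (auto simp: morph_def)
next
  assume "\<exists>\<eta>. v = morph h \<eta>"
  then obtain \<eta> where "v = morph h \<eta>" by blast
  then show "v \<in> wstar (range h)" unfolding wstar_def morph_def by (intro CollectI exI[of _ "map h \<eta>"]) auto
qed

definition PP :: "('a \<Rightarrow> 'b list) \<Rightarrow> 'a \<Rightarrow> nat \<Rightarrow> 'b" where
  "PP h c i = h c ! (i mod length (h c))"

lemma prefP:
  assumes ne: "\<And>a. h a \<noteq> []" and agree: "\<And>c d i. c \<noteq> d \<Longrightarrow> i < m \<Longrightarrow> PP h c i = PP h d i"
  shows "t \<le> m \<Longrightarrow> t < length (morph h (c#\<gamma>)) \<Longrightarrow> morph h (c#\<gamma>) ! t = PP h c t"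
proof (induction t arbitrary: c \<gamma> rule: less_induct)
  case (less t)
  show ?case
  proof (cases "t < length (h c)")
    case True
    then show ?thesis by (simp add: PP_def nth_append)
  next
    case False
    define t' where "t' = t - length (h c)"
    have tt: "t = t' + length (h c)" using False t'_def by simp
    have lenc: "length (h c) > 0" using ne by auto
    have "t' < length (morph h \<gamma>)" using less.prems tt by simp
    then obtain e \<gamma>' where g: "\<gamma> = e # \<gamma>'" by (cases \<gamma>) auto
    have "morph h (c#\<gamma>) ! t = morph h (e#\<gamma>') ! t'"
      using False g tt by (simp add: nth_append)
    also have "\<dots> = PP h e t'"
      using less.IH[of t' e \<gamma>'] less.prems tt lenc g \<open>t' < length (morph h \<gamma>)\<close> by simp
    also have "\<dots> = PP h c t'"
    proof (cases "e = c")
      case False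
      then show ?thesis using agree[of e c t'] less.prems tt lenc by simp
    qed simp
    also have "\<dots> = PP h c t" unfolding PP_def tt by simp
    finally show ?thesis .
  qed
qed


locale bincode =
  fixes h :: "'a \<Rightarrow> 'b list" and m :: nat and M :: nat
  assumes ne: "\<And>a. h a \<noteq> []" and injm: "inj (morph h)"
    and agree: "\<And>c d i. c \<noteq> d \<Longrightarrow> i < m \<Longrightarrow> PP h c i = PP h d i"
    and differ: "\<And>c d. c \<noteq> d \<Longrightarrow> PP h c m \<noteq> PP h d m"
    and Mb: "\<And>a. length (h a) \<le> M" and card2: "card (UNIV :: 'a set) = 2"
begin

lemma M_pos: "1 \<le> M"
  using Mb[of undefined] ne[of undefined] by (cases "h undefined") auto

lemma lcp1:
  assumes "c \<noteq> d"
  shows "t < m \<Longrightarrow> t < length (morph h (c#g1)) \<Longrightarrow> t < length (morph h (d#g2)) \<Longrightarrow>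
           morph h (c#g1) ! t = morph h (d#g2) ! t"
    and "m < length (morph h (c#g1)) \<Longrightarrow> m < length (morph h (d#g2)) \<Longrightarrow>
           morph h (c#g1) ! m \<noteq> morph h (d#g2) ! m"
proof -
  show "t < m \<Longrightarrow> t < length (morph h (c#g1)) \<Longrightarrow> t < length (morph h (d#g2)) \<Longrightarrow>
           morph h (c#g1) ! t = morph h (d#g2) ! t"
    using prefP[OF ne agree, where t=t and c=c and \<gamma>=g1] prefP[OF ne agree, where t=t and c=d and \<gamma>=g2] agree[OF assms, of t] by auto
  show "m < length (morph h (c#g1)) \<Longrightarrow> m < length (morph h (d#g2)) \<Longrightarrow>
           morph h (c#g1) ! m \<noteq> morph h (d#g2) ! m"
    using prefP[OF ne agree, where t=m and c=c and \<gamma>=g1] prefP[OF ne agree, where t=m and c=d and \<gamma>=g2] differ[OF assms] by auto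
qed

lemma split_at: "n < length \<alpha> \<Longrightarrow> morph h \<alpha> = morph h (take n \<alpha>) @ morph h (\<alpha>!n # drop (Suc n) \<alpha>)"
  by (metis id_take_nth_drop morph_simps(3))

lemma lcp2:
  assumes tk: "take n a1 = take n a2" and n1: "n < length a1" and n2: "n < length a2"
    and df: "a1!n \<noteq> a2!n"
  shows "t < length s + length (morph h (take n a1)) + m \<Longrightarrow> t < length (s @ morph h a1) \<Longrightarrow>
           t < length (s @ morph h a2) \<Longrightarrow> (s @ morph h a1) ! t = (s @ morph h a2) ! t"
    and "length s + length (morph h (take n a1)) + m < length (s @ morph h a1) \<Longrightarrow>
         length s + length (morph h (take n a1)) + m < length (s @ morph h a2) \<Longrightarrow>
         (s @ morph h a1) ! (length s + length (morph h (take n a1)) + m) \<noteq>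
         (s @ morph h a2) ! (length s + length (morph h (take n a1)) + m)"
proof -
  define pre where "pre = s @ morph h (take n a1)"
  have e1: "s @ morph h a1 = pre @ morph h (a1!n # drop (Suc n) a1)"
    using split_at[OF n1] pre_def by simp
  have e2: "s @ morph h a2 = pre @ morph h (a2!n # drop (Suc n) a2)"
    using split_at[OF n2] pre_def tk by simp
  have lp: "length pre = length s + length (morph h (take n a1))" using pre_def by simp
  show "t < length s + length (morph h (take n a1)) + m \<Longrightarrow> t < length (s @ morph h a1) \<Longrightarrow>
           t < length (s @ morph h a2) \<Longrightarrow> (s @ morph h a1) ! t = (s @ morph h a2) ! t"
  proof -
    assume a: "t < length s + length (morph h (take n a1)) + m" "t < length (s @ morph h a1)"
           "t < length (s @ morph h a2)"
    show ?thesis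
    proof (cases "t < length pre")
      case True then show ?thesis unfolding e1 e2 by (simp add: nth_append)
    next
      case False
      then show ?thesis unfolding e1 e2 using lcp1(1)[OF df, of "t - length pre"] a lp e1 e2
        by (simp add: nth_append)
    qed
  qed
  show "length s + length (morph h (take n a1)) + m < length (s @ morph h a1) \<Longrightarrow>
         length s + length (morph h (take n a1)) + m < length (s @ morph h a2) \<Longrightarrow>
         (s @ morph h a1) ! (length s + length (morph h (take n a1)) + m) \<noteq>
         (s @ morph h a2) ! (length s + length (morph h (take n a1)) + m)"
    unfolding e1 e2 using lcp1(2)[OF df] lp by (simp add: nth_append)
qed


lemma prefix_agree0:
  assumes "\<And>k. k < length b1 \<Longrightarrow> k < length b2 \<Longrightarrow> b1!k = b2!k" "length b1 \<le> length b2"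
    "t < length (morph h b1)"
  shows "morph h b1 ! t = morph h b2 ! t"
proof -
  have "b1 = take (length b1) b2" using assms(1,2) by (intro nth_equalityI) auto
  then have "morph h b2 = morph h b1 @ morph h (drop (length b1) b2)"
    by (metis append_take_drop_id morph_simps(3))
  then show ?thesis using assms(3) by (simp add: nth_append)
qed

lemma prefix_agree:
  assumes "\<And>k. k < length b1 \<Longrightarrow> k < length b2 \<Longrightarrow> b1!k = b2!k"
    "t < length (morph h b1)" "t < length (morph h b2)"
  shows "morph h b1 ! t = morph h b2 ! t"
proof (cases "length b1 \<le> length b2")
  case True then show ?thesis using prefix_agree0 assms by blast
next
  case False then show ?thesis using prefix_agree0[of b2 b1 t] assms by fastforce
qed

lemma det:
  assumes l1: "l1 \<le> length (morph h a1)" and l2: "l2 \<le> length (morph h a2)"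
    and g1: "l1 \<le> length (s @ morph h b1)" and g2: "l2 \<le> length (s @ morph h b2)"
    and e1: "take l1 (morph h a1) = take l1 (s @ morph h b1)"
    and e2: "take l2 (morph h a2) = take l2 (s @ morph h b2)"
    and sne: "s \<noteq> []"
    and disj: "\<And>j1 j2. length (morph h (take j1 a1)) = length s + length (morph h (take j2 b1)) \<Longrightarrow>
                 l1 \<le> length (morph h (take j1 a1))"
  shows "length (morph h (take i a1)) + m < min l1 l2 \<Longrightarrow> take i a1 = take i a2"
proof (induction i)
  case 0 then show ?case by simp
next
  case (Suc i)
  have pre: "morph h (take (Suc i) a1) = morph h (take i a1) @ morph h (take 1 (drop i a1))"
    using morph_take_add[of h i 1 a1] by simp
  then have "length (morph h (take i a1)) + m < min l1 l2" using Suc.prems by simp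
  then have IH: "take i a1 = take i a2" using Suc.IH by blast
  define P where "P = length (morph h (take i a1))"
  have i1: "i < length a1"
  proof (rule ccontr)
    assume "\<not> i < length a1"
    then have "take (Suc i) a1 = a1" by simp
    then show False using Suc.prems l1 by simp
  qed
  have i2: "i < length a2"
  proof (rule ccontr)
    assume "\<not> i < length a2"
    then have "a2 = take i a1" using IH by simp
    then have "length (morph h a2) \<le> length (morph h (take (Suc i) a1))" using pre by simp
    then show False using Suc.prems l2 by simp
  qed
  show ?case
  proof (cases "a1!i = a2!i")
    case True
    then show ?thesis using IH i1 i2 by (simp add: take_Suc_conv_app_nth)
  next
    case df: False
    have Pm: "P + m < l1" "P + m < l2" using Suc.prems pre P_def by auto
    define S1 where "S1 = s @ morph h b1"
    define S2 where "S2 = s @ morph h b2"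
    have S1a: "t < l1 \<Longrightarrow> S1 ! t = morph h a1 ! t" for t
      using e1 S1_def by (metis nth_take)
    have S2a: "t < l2 \<Longrightarrow> S2 ! t = morph h a2 ! t" for t
      using e2 S2_def by (metis nth_take)
    have agA: "t < P + m \<Longrightarrow> morph h a1 ! t = morph h a2 ! t" for t
      using lcp2(1)[OF IH i1 i2 df, of t "[]"] Pm l1 l2 P_def by simp
    have dfA: "morph h a1 ! (P+m) \<noteq> morph h a2 ! (P+m)"
      using lcp2(2)[OF IH i1 i2 df, of "[]"] Pm l1 l2 P_def by simp
    have agS: "t < P + m \<Longrightarrow> S1 ! t = S2 ! t" for t using agA S1a S2a Pm by simp
    have dfS: "S1 ! (P+m) \<noteq> S2 ! (P+m)" using dfA S1a S2a Pm by simp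
    have lS: "P + m < length S1" "P + m < length S2" using Pm g1 g2 S1_def S2_def by auto
    show ?thesis
    proof (cases "\<exists>k. k < length b1 \<and> k < length b2 \<and> b1!k \<noteq> b2!k")
      case False
      have "S1 ! (P+m) = S2 ! (P+m)"
      proof (cases "P + m < length s")
        case True then show ?thesis unfolding S1_def S2_def by (simp add: nth_append)
      next
        case False2: False
        have "morph h b1 ! (P + m - length s) = morph h b2 ! (P + m - length s)"
          using prefix_agree[of b1 b2] False lS S1_def S2_def False2 by auto
        then show ?thesis unfolding S1_def S2_def using False2 by (simp add: nth_append)
      qed
      then show ?thesis using dfS by simp
    next
      case True
      define n1 where "n1 = (LEAST k. k < length b1 \<and> k < length b2 \<and> b1!k \<noteq> b2!k)"
      have n1p: "n1 < length b1" "n1 < length b2" "b1!n1 \<noteq> b2!n1"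
        using LeastI_ex[OF True] n1_def by auto
      have n1m: "k < n1 \<Longrightarrow> b1!k = b2!k" for k
        using not_less_Least[of k "\<lambda>k. k < length b1 \<and> k < length b2 \<and> b1!k \<noteq> b2!k"] n1_def n1p
        by fastforce
      have tkb: "take n1 b1 = take n1 b2"
        using n1p n1m by (intro nth_equalityI) auto
      define Q where "Q = length s + length (morph h (take n1 b1))"
      have agB: "t < Q + m \<Longrightarrow> t < length S1 \<Longrightarrow> t < length S2 \<Longrightarrow> S1 ! t = S2 ! t" for t
        using lcp2(1)[OF tkb n1p] S1_def S2_def Q_def by simp
      have dfB: "Q + m < length S1 \<Longrightarrow> Q + m < length S2 \<Longrightarrow> S1 ! (Q+m) \<noteq> S2 ! (Q+m)"
        using lcp2(2)[OF tkb n1p] S1_def S2_def Q_def by simp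
      have "Q = P"
      proof (rule ccontr)
        assume "Q \<noteq> P"
        then consider "Q < P" | "P < Q" by linarith
        then show False
        proof cases
          case 1
          then show False using dfB agS lS by (metis add_less_cancel_right less_trans)
        next
          case 2
          then show False using agB dfS lS by simp
        qed
      qed
      then have "l1 \<le> P" using disj[of i n1] P_def Q_def by simp
      then show ?thesis using Pm by simp
    qed
  qed
qed


end


context bincode begin
lemma cut_state:
  assumes G: "p2 @ u @ s2 = morph h \<eta>"
    and disj: "\<And>j2. length (morph h (take j2 \<eta>)) \<noteq> length p2 + t"
    and t: "t < length u"
  shows "\<exists>r d. r < length \<eta> \<and> 0 < d \<and> d < length (h (\<eta>!r)) \<and>
               length (morph h (take r \<eta>)) + d = length p2 + t"
proof -
  let ?P = "\<lambda>r. length p2 + t < length (morph h (take (Suc r) \<eta>))"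
  have ex: "?P (length \<eta>)" using G[symmetric] t by simp
  define r where "r = (LEAST r. ?P r)"
  have Pr: "?P r" using LeastI[of ?P, OF ex] r_def by simp
  have le: "length (morph h (take r \<eta>)) \<le> length p2 + t"
  proof (cases r)
    case 0 then show ?thesis by simp
  next
    case (Suc r')
    then have "\<not> ?P r'" using not_less_Least[of r' ?P] r_def by simp
    then show ?thesis using Suc by simp
  qed
  then have lt: "length (morph h (take r \<eta>)) < length p2 + t" using disj[of r] by simp
  have rl: "r < length \<eta>"
  proof (rule ccontr)
    assume "\<not> r < length \<eta>"
    then have "take (Suc r) \<eta> = take r \<eta>" by simp
    then show False using Pr le by simp
  qed
  have "morph h (take (Suc r) \<eta>) = morph h (take r \<eta>) @ h (\<eta>!r)"
    using rl by (simp add: take_Suc_conv_app_nth)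
  then show ?thesis using Pr lt rl
    by (intro exI[of _ r] exI[of _ "length p2 + t - length (morph h (take r \<eta>))"]) auto
qed

lemma drop_app_len: "x = y @ z \<Longrightarrow> drop (length y + d) x = drop d z" by simp

lemma core_step:
  assumes F: "p1 @ u @ s1 = morph h \<zeta>" and G: "p2 @ u @ s2 = morph h \<eta>"
    and disj: "\<And>t j1 j2. t \<le> length u \<Longrightarrow> length (morph h (take j1 \<zeta>)) = length p1 + t \<Longrightarrow>
                 length (morph h (take j2 \<eta>)) = length p2 + t \<Longrightarrow> False"
    and cj: "length (morph h (take j \<zeta>)) = length p1 + t" and tu: "t < length u"
    and cj': "length (morph h (take j' \<zeta>)) = length p1 + t'" and tu': "t' < length u"
    and tt: "t \<le> t'"
    and r: "r < length \<eta>" "d < length (h (\<eta>!r))" "0 < d" "length (morph h (take r \<eta>)) + d = length p2 + t"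
    and r': "r' < length \<eta>" "d < length (h (\<eta>!r'))" "length (morph h (take r' \<eta>)) + d = length p2 + t'"
    and same: "\<eta>!r = \<eta>!r'"
  shows "length (morph h (take i (drop j \<zeta>))) + m < length u - t' \<Longrightarrow>
         take i (drop j \<zeta>) = take i (drop j' \<zeta>)"
proof -
  define s where "s = drop d (h (\<eta>!r))"
  have sne: "s \<noteq> []" using r s_def by simp
  have gen: "morph h (drop jj \<zeta>) = drop tx u @ s1 \<and> drop tx u @ s2 = s @ morph h (drop (Suc rr) \<eta>)"
    if "length (morph h (take jj \<zeta>)) = length p1 + tx" "tx < length u"
       "rr < length \<eta>" "length (morph h (take rr \<eta>)) + d = length p2 + tx" "\<eta>!rr = \<eta>!r"
       "d < length (h (\<eta>!r))"
     for jj tx rr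
  proof
    have "morph h \<zeta> = morph h (take jj \<zeta>) @ morph h (drop jj \<zeta>)"
      by (metis append_take_drop_id morph_simps(3))
    then have "drop (length (morph h (take jj \<zeta>))) (morph h \<zeta>) = morph h (drop jj \<zeta>)"
      by (metis append_eq_conv_conj)
    then have "drop (length p1 + tx) (p1 @ u @ s1) = morph h (drop jj \<zeta>)"
      by (simp only: that(1) F)
    then show "morph h (drop jj \<zeta>) = drop tx u @ s1" using that(2) by simp
    have "morph h \<eta> = morph h (take rr \<eta>) @ (h (\<eta>!rr) @ morph h (drop (Suc rr) \<eta>))"
      using split_at[OF that(3)] by simp
    then have "drop (length (morph h (take rr \<eta>)) + d) (morph h \<eta>) = drop d (h (\<eta>!rr) @ morph h (drop (Suc rr) \<eta>))"
      by (rule drop_app_len)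
    then have "drop (length p2 + tx) (p2 @ u @ s2) = drop d (h (\<eta>!r) @ morph h (drop (Suc rr) \<eta>))"
      by (simp only: that(4,5) G)
    then show "drop tx u @ s2 = s @ morph h (drop (Suc rr) \<eta>)" using that(2,6) s_def by simp
  qed
  have A1: "morph h (drop j \<zeta>) = drop t u @ s1" and B1: "drop t u @ s2 = s @ morph h (drop (Suc r) \<eta>)"
    using gen[OF cj tu r(1) r(4)] r by auto
  have A2: "morph h (drop j' \<zeta>) = drop t' u @ s1" and B2: "drop t' u @ s2 = s @ morph h (drop (Suc r') \<eta>)"
    using gen[OF cj' tu' r'(1) r'(3)] r r' same by auto
  show "length (morph h (take i (drop j \<zeta>))) + m < length u - t' \<Longrightarrow>
         take i (drop j \<zeta>) = take i (drop j' \<zeta>)"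
  proof -
    assume a: "length (morph h (take i (drop j \<zeta>))) + m < length u - t'"
    have "length (morph h (take i (drop j \<zeta>))) + m < min (length u - t) (length u - t')"
      using a tt by simp
    show ?thesis
    proof (rule det[of "length u - t" "drop j \<zeta>" "length u - t'" "drop j' \<zeta>" s "drop (Suc r) \<eta>" "drop (Suc r') \<eta>"])
      show "length u - t \<le> length (morph h (drop j \<zeta>))" using A1 by simp
      show "length u - t' \<le> length (morph h (drop j' \<zeta>))" using A2 by simp
      show "length u - t \<le> length (s @ morph h (drop (Suc r) \<eta>))" using B1[symmetric] by simp
      show "length u - t' \<le> length (s @ morph h (drop (Suc r') \<eta>))" using B2[symmetric] by simp
      show "take (length u - t) (morph h (drop j \<zeta>)) = take (length u - t) (s @ morph h (drop (Suc r) \<eta>))"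
        using A1 B1[symmetric] by simp
      show "take (length u - t') (morph h (drop j' \<zeta>)) = take (length u - t') (s @ morph h (drop (Suc r') \<eta>))"
        using A2 B2[symmetric] by simp
      show "s \<noteq> []" by (rule sne)
      show "length (morph h (take i (drop j \<zeta>))) + m < min (length u - t) (length u - t')"
        using a tt by simp
    next
      fix j1 j2
      assume eq: "length (morph h (take j1 (drop j \<zeta>))) = length s + length (morph h (take j2 (drop (Suc r) \<eta>)))"
      show "length u - t \<le> length (morph h (take j1 (drop j \<zeta>)))"
      proof (rule ccontr)
        assume "\<not> ?thesis"
        then have V: "length (morph h (take j1 (drop j \<zeta>))) < length u - t" by simp
        have f1: "length (morph h (take (j + j1) \<zeta>)) = length p1 + (t + length (morph h (take j1 (drop j \<zeta>))))"
          using morph_take_add[of h j j1 \<zeta>] cj by simp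
        have "morph h (take (Suc r) \<eta>) = morph h (take r \<eta>) @ h (\<eta>!r)"
          using r(1) by (simp add: take_Suc_conv_app_nth)
        then have f2: "length (morph h (take (Suc r + j2) \<eta>)) = length p2 + (t + length (morph h (take j1 (drop j \<zeta>))))"
          using morph_take_add[of h "Suc r" j2 \<eta>] eq r s_def by simp
        show False using disj[OF _ f1 f2] V by arith
      qed
    qed
  qed
qed

end


context bincode begin

lemma mlen: "length (morph h xs) \<le> M * length xs"
  by (rule len_morph_le) (rule Mb)

lemma core:
  assumes F: "p1 @ u @ s1 = morph h \<zeta>" and G: "p2 @ u @ s2 = morph h \<eta>"
    and disj: "\<And>t j1 j2. t \<le> length u \<Longrightarrow> length (morph h (take j1 \<zeta>)) = length p1 + t \<Longrightarrow>
                 length (morph h (take j2 \<eta>)) = length p2 + t \<Longrightarrow> False"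
    and big: "M * (2*M + 2) + m + 1 < length u"
  shows "\<exists>k q I. 1 \<le> q \<and> q \<le> 2*M \<and> k + q + I \<le> length \<zeta> \<and> (\<forall>i<I. \<zeta>!(k+i) = \<zeta>!(k+q+i)) \<and>
           length u \<le> M*I + M*(2*M+2) + m + 1"
proof -
  define cz where "cz j = length (morph h (take j \<zeta>))" for j
  have czSuc: "cz (Suc j) \<le> cz j + M" for j
  proof -
    have "cz (Suc j) = cz j + length (morph h (take 1 (drop j \<zeta>)))"
      using morph_take_add[of h j 1 \<zeta>] cz_def by simp
    moreover have "length (morph h (take 1 (drop j \<zeta>))) \<le> M * length (take 1 (drop j \<zeta>))"
      by (rule len_morph_le[OF Mb])
    moreover have "length (take 1 (drop j \<zeta>)) \<le> 1" by simp
    ultimately show ?thesis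
      by (metis add_le_cancel_left mult.right_neutral mult_le_mono2 order_trans)
  qed
  have czmono: "j \<le> j' \<Longrightarrow> cz j \<le> cz j'" for j j'
    using morph_take_add[of h j "j' - j" \<zeta>] cz_def by simp
  have czadd: "cz (j + k) \<le> cz j + k * M" for j k
  proof (induction k)
    case (Suc k)
    then show ?case using czSuc[of "j + k"] by simp
  qed simp
  have czfull: "cz (length \<zeta>) = length p1 + length u + length s1"
    using F[symmetric] cz_def by simp
  have ex0: "\<exists>j. length p1 \<le> cz j" using czfull by (intro exI[of _ "length \<zeta>"]) simp
  define j0 where "j0 = (LEAST j. length p1 \<le> cz j)"
  have j0a: "length p1 \<le> cz j0" using LeastI_ex[OF ex0] j0_def by simp
  have j0b: "cz j0 < length p1 + M"
  proof (cases j0)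
    case 0 then show ?thesis using M_pos cz_def by simp
  next
    case (Suc j')
    then have "\<not> length p1 \<le> cz j'" using not_less_Least[of j' "\<lambda>j. length p1 \<le> cz j"] j0_def by simp
    then show ?thesis using czSuc[of j'] Suc by simp
  qed
  define A where "A = {j0..j0 + 2*M}"
  define tt where "tt j = cz j - length p1" for j
  have MM: "M * (2*M+2) = 2*(M*M) + 2*M" by (simp add: algebra_simps)
  have inA: "length p1 \<le> cz j \<and> cz j = length p1 + tt j \<and> tt j < M + 2*M*M" if "j \<in> A" for j
  proof -
    have "j0 \<le> j" "j \<le> j0 + 2*M" using that A_def by auto
    then have "cz j \<le> cz j0 + (2*M)*M" using czmono czadd[of j0 "2*M"] by (meson order_trans)
    then show ?thesis using czmono[of j0 j] \<open>j0 \<le> j\<close> j0a j0b tt_def by auto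
  qed
  have ttu: "tt j < length u" if "j \<in> A" for j using inA[OF that] big MM by simp
  have "\<forall>j\<in>A. \<exists>r d. r < length \<eta> \<and> 0 < d \<and> d < length (h (\<eta>!r)) \<and>
               length (morph h (take r \<eta>)) + d = length p2 + tt j"
  proof
    fix j assume jA: "j \<in> A"
    show "\<exists>r d. r < length \<eta> \<and> 0 < d \<and> d < length (h (\<eta>!r)) \<and>
               length (morph h (take r \<eta>)) + d = length p2 + tt j"
    proof (rule cut_state[OF G _ ttu[OF jA]])
      fix j2
      show "length (morph h (take j2 \<eta>)) \<noteq> length p2 + tt j"
        using disj[of "tt j" j j2] inA[OF jA] ttu[OF jA] cz_def by auto
    qed
  qed
  then obtain R D where RD: "\<forall>j\<in>A. R j < length \<eta> \<and> 0 < D j \<and> D j < length (h (\<eta>!R j)) \<and>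
               length (morph h (take (R j) \<eta>)) + D j = length p2 + tt j"
    by metis
  define st where "st j = (\<eta>!R j, D j)" for j
  have stB: "st ` A \<subseteq> UNIV \<times> {..<M}"
    using RD Mb st_def by (auto intro: less_le_trans)
  have cardB: "card (UNIV \<times> {..<M} :: ('a \<times> nat) set) = 2*M"
    using card2 by (simp add: card_cartesian_product)
  have finB: "finite (UNIV \<times> {..<M} :: ('a \<times> nat) set)"
    using card2 card.infinite by (metis finite_SigmaI finite_lessThan zero_neq_numeral)
  have "card A = 2*M + 1" using A_def by simp
  then have "\<not> inj_on st A" using card_inj_on_le[OF _ stB finB] cardB by auto
  then obtain x y where xy: "x \<in> A" "y \<in> A" "x \<noteq> y" "st x = st y" unfolding inj_on_def by blast
  obtain j j' where jj: "j \<in> A" "j' \<in> A" "j < j'" "st j = st j'"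
    using xy by (metis linorder_neqE_nat)
  have ttle: "tt j \<le> tt j'" using czmono[of j j'] jj(3) tt_def by simp
  have same: "\<eta>!R j = \<eta>!R j'" "D j = D j'" using jj(4) st_def by auto
  have step: "length (morph h (take i (drop j \<zeta>))) + m < length u - tt j' \<Longrightarrow>
         take i (drop j \<zeta>) = take i (drop j' \<zeta>)" for i
    apply (rule core_step[OF F G disj, where j=j and t="tt j" and j'=j' and t'="tt j'" and r="R j" and d="D j" and r'="R j'"])
    using inA[OF jj(1)] inA[OF jj(2)] ttu[OF jj(1)] ttu[OF jj(2)] ttle RD jj(1,2) same cz_def
    by auto
  have ttb: "tt j' + m + 1 < length u"
  proof -
    have "tt j' < M + 2*M*M" using inA[OF jj(2)] by simp
    also have "\<dots> \<le> M * (2*M+2)" by (simp add: algebra_simps)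
    finally show ?thesis using big by linarith
  qed
  define I where "I = (length u - tt j' - m - 1) div M"
  have MI: "M * I \<le> length u - tt j' - m - 1" using I_def times_div_less_eq_dividend by simp
  have MI2: "length u - tt j' - m - 1 < M + M * I" using I_def dividend_less_times_div M_pos by simp
  have dl: "length (morph h (drop j' \<zeta>)) \<ge> length u - tt j'"
  proof -
    have "morph h \<zeta> = morph h (take j' \<zeta>) @ morph h (drop j' \<zeta>)"
      by (metis append_take_drop_id morph_simps(3))
    then have "length (morph h \<zeta>) = cz j' + length (morph h (drop j' \<zeta>))" using cz_def by simp
    then show ?thesis using F[symmetric] inA[OF jj(2)] by simp
  qed
  have "M * I < M * length (drop j' \<zeta>)"
    using dl mlen[of "drop j' \<zeta>"] MI ttu[OF jj(2)] by linarith
  then have Ilen: "I < length (drop j' \<zeta>)" by simp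
  have per: "\<zeta>!(j+i) = \<zeta>!(j + (j'-j) + i)" if "i < I" for i
  proof -
    have "length (morph h (take (Suc i) (drop j \<zeta>))) \<le> M * length (take (Suc i) (drop j \<zeta>))"
      by (rule len_morph_le[OF Mb])
    also have "\<dots> \<le> M * Suc i" by (intro mult_le_mono2) simp
    also have "\<dots> \<le> M * I" using that by (intro mult_le_mono2) simp
    finally have "length (morph h (take (Suc i) (drop j \<zeta>))) + m < length u - tt j'"
      using MI ttb by linarith
    then have e: "take (Suc i) (drop j \<zeta>) = take (Suc i) (drop j' \<zeta>)" using step by blast
    have "i < length (drop j' \<zeta>)" "i < length (drop j \<zeta>)" using Ilen that jj(3) by auto
    then have "drop j \<zeta> ! i = drop j' \<zeta> ! i" using e by (metis lessI nth_take)
    then show ?thesis using jj(3) \<open>i < length (drop j \<zeta>)\<close> \<open>i < length (drop j' \<zeta>)\<close> by simp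
  qed
  show ?thesis
  proof (intro exI conjI allI impI)
    show "1 \<le> j' - j" using jj(3) by simp
    show "j' - j \<le> 2*M" using jj A_def by auto
    show "j + (j' - j) + I \<le> length \<zeta>" using Ilen jj(3) by simp
    show "\<zeta>!(j+i) = \<zeta>!(j + (j'-j) + i)" if "i < I" for i using per that by blast
    show "length u \<le> M*I + M*(2*M+2) + m + 1"
      using MI2 inA[OF jj(2)] MM by linarith
  qed
qed

end


context bincode begin

lemma cut_take: "length (morph h (take j xs)) = n \<Longrightarrow> morph h (take j xs) = take n (morph h xs)"
  by (metis append_eq_conv_conj append_take_drop_id morph_simps(3))

lemma cz_less: "length (morph h (take j xs)) < length (morph h (take j' xs)) \<Longrightarrow> j < j'"
proof (rule ccontr)
  assume a: "length (morph h (take j xs)) < length (morph h (take j' xs))" "\<not> j < j'"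
  then have "take j xs = take j' xs @ take (j - j') (drop j' xs)"
    by (metis le_add_diff_inverse not_le take_add)
  then show False using a by simp
qed

lemma split_nonsync:
  assumes F: "p1 @ u @ s1 = morph h \<zeta>" and ns: "\<not> sync_word (range h) u" and lu: "2*M \<le> length u"
  shows "\<exists>u' p1' s1' p2' s2' \<eta>. p1' @ u' @ s1' = morph h \<zeta> \<and> p2' @ u' @ s2' = morph h \<eta> \<and>
     (\<forall>t j1 j2. t \<le> length u' \<longrightarrow> length (morph h (take j1 \<zeta>)) = length p1' + t \<longrightarrow>
         length (morph h (take j2 \<eta>)) = length p2' + t \<longrightarrow> False) \<and> length u div 2 \<le> length u' + M"
proof -
  define cz where "cz j = length (morph h (take j \<zeta>))" for j
  have czSuc: "cz (Suc j) \<le> cz j + M" for j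
  proof -
    have "cz (Suc j) = cz j + length (morph h (take 1 (drop j \<zeta>)))"
      using morph_take_add[of h j 1 \<zeta>] cz_def by simp
    moreover have "length (morph h (take 1 (drop j \<zeta>))) \<le> M * length (take 1 (drop j \<zeta>))"
      by (rule len_morph_le[OF Mb])
    moreover have "length (take 1 (drop j \<zeta>)) \<le> 1" by simp
    ultimately show ?thesis
      by (metis add_le_cancel_left mult.right_neutral mult_le_mono2 order_trans)
  qed
  have czfull: "cz (length \<zeta>) = length p1 + length u + length s1"
    using F[symmetric] cz_def by simp
  let ?Q = "\<lambda>j. length p1 + length u div 2 \<le> cz j"
  have ex0: "?Q (length \<zeta>)" using czfull by simp
  define jc where "jc = (LEAST j. ?Q j)"
  have jca: "?Q jc" using LeastI[of ?Q, OF ex0] jc_def by simp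
  have jcle: "jc \<le> length \<zeta>" using Least_le[of ?Q, OF ex0] jc_def by simp
  have jcb: "cz jc < length p1 + length u div 2 + M"
  proof (cases jc)
    case 0 then show ?thesis using M_pos cz_def by simp
  next
    case (Suc j')
    then have "\<not> ?Q j'" using not_less_Least[of j' ?Q] jc_def by simp
    then show ?thesis using czSuc[of j'] Suc by simp
  qed
  define tc where "tc = cz jc - length p1"
  have tc1: "length u div 2 \<le> tc" "cz jc = length p1 + tc" using jca tc_def by auto
  have tc2: "tc < length u div 2 + M" using jcb tc1 by simp
  have tcu: "tc \<le> length u" using tc2 lu by linarith
  define w1 where "w1 = take tc u"
  define w2 where "w2 = drop tc u"
  have u12: "u = w1 @ w2" using w1_def w2_def by simp
  obtain v p s where vps: "v \<in> wstar (range h)" "v = p @ u @ s"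
      and nw: "\<not> (p @ w1 \<in> wstar (range h) \<and> w2 @ s \<in> wstar (range h))"
    using ns u12 unfolding sync_word_def by blast
  obtain \<eta> where eta: "v = morph h \<eta>" using vps(1) wstar_iff by blast
  have G: "p @ u @ s = morph h \<eta>" using vps eta by simp
  have lw1: "length w1 = tc" using w1_def tcu by simp
  have nocut: False if g: "length (morph h (take g \<eta>)) = length p + tc" for g
  proof -
    have "morph h (take g \<eta>) = take (length p + tc) (morph h \<eta>)" using cut_take[OF g] .
    then have e1: "morph h (take g \<eta>) = p @ w1" using G[symmetric] w1_def tcu by simp
    have "morph h \<eta> = morph h (take g \<eta>) @ morph h (drop g \<eta>)"
      by (metis append_take_drop_id morph_simps(3))
    then have "morph h (drop g \<eta>) = w2 @ s" using e1 G[symmetric] u12 by simp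
    then show False using nw e1 wstar_iff by metis
  qed
  define CC where "CC t \<longleftrightarrow> (\<exists>j1 j2. length (morph h (take j1 \<zeta>)) = length p1 + t \<and>
                                   length (morph h (take j2 \<eta>)) = length p + t)" for t
  have claim: False if a: "a \<le> tc" "CC a" and b: "tc \<le> b" "b \<le> length u" "CC b" for a b
  proof -
    obtain ja ga where jga: "length (morph h (take ja \<zeta>)) = length p1 + a"
        "length (morph h (take ga \<eta>)) = length p + a" using a CC_def by blast
    obtain jb gb where jgb: "length (morph h (take jb \<zeta>)) = length p1 + b"
        "length (morph h (take gb \<eta>)) = length p + b" using b CC_def by blast
    have atc: "a < tc" using nocut[of ga] jga(2) a(1) by (cases "a = tc") auto
    have btc: "tc < b" using nocut[of gb] jgb(2) b(1) by (cases "b = tc") auto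
    have jlt: "ja < jc" "jc < jb" using cz_less[of ja \<zeta> jc] cz_less[of jc \<zeta> jb] jga jgb tc1 atc btc cz_def
      by auto
    have glt: "ga < gb" using cz_less[of ga \<eta> gb] jga jgb atc btc by auto
    define \<sigma>1 where "\<sigma>1 = drop ja (take jb \<zeta>)"
    define \<sigma>2 where "\<sigma>2 = drop ga (take gb \<eta>)"
    have pa1: "morph h (take ja \<zeta>) = p1 @ take a u" using cut_take[OF jga(1)] F[symmetric] atc tcu by simp
    have pb1: "morph h (take jb \<zeta>) = p1 @ take b u" using cut_take[OF jgb(1)] F[symmetric] b by simp
    have pa2: "morph h (take ga \<eta>) = p @ take a u" using cut_take[OF jga(2)] G[symmetric] atc tcu by simp
    have pb2: "morph h (take gb \<eta>) = p @ take b u" using cut_take[OF jgb(2)] G[symmetric] b by simp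
    have "take jb \<zeta> = take ja \<zeta> @ \<sigma>1" using jlt \<sigma>1_def
      by (metis append_take_drop_id less_imp_le_nat min.absorb1 take_take)
    then have "morph h (take jb \<zeta>) = morph h (take ja \<zeta>) @ morph h \<sigma>1" by simp
    then have m1: "p1 @ take b u = p1 @ take a u @ morph h \<sigma>1" using pa1 pb1 by simp
    have "take gb \<eta> = take ga \<eta> @ \<sigma>2" using glt \<sigma>2_def
      by (metis append_take_drop_id less_imp_le_nat min.absorb1 take_take)
    then have "morph h (take gb \<eta>) = morph h (take ga \<eta>) @ morph h \<sigma>2" by simp
    then have m2: "p @ take b u = p @ take a u @ morph h \<sigma>2" using pa2 pb2 by simp
    have "morph h \<sigma>1 = morph h \<sigma>2" using m1 m2 by simp
    then have s12: "\<sigma>1 = \<sigma>2" using injm by (simp add: inj_eq)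
    define k where "k = jc - ja"
    have "take jc \<zeta> = take ja \<zeta> @ take k \<sigma>1"
      using jlt k_def \<sigma>1_def apply (simp add: take_add[symmetric] take_drop min_def)
      by (metis append_take_drop_id less_imp_le_nat min.absorb1 take_take)
    then have "morph h (take jc \<zeta>) = p1 @ take a u @ morph h (take k \<sigma>1)" using pa1 by simp
    then have lk: "length (morph h (take k \<sigma>1)) = tc - a" using tc1 cz_def atc tcu by simp
    have "morph h (take k \<sigma>1) = take (tc - a) (morph h \<sigma>1)" using cut_take[OF lk] .
    also have "\<dots> = take (tc - a) (drop a (take b u))" using m1 atc tcu by simp
    also have "\<dots> = drop a (take tc u)" using btc atc by (simp add: take_drop min_def)
    finally have mk: "morph h (take k \<sigma>2) = drop a (take tc u)" using s12 by simp
    define X where "X = take ga \<eta> @ take k \<sigma>2"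
    have tt: "take a u @ drop a (take tc u) = take tc u"
      using atc by (metis append_take_drop_id less_imp_le_nat min.absorb1 take_take)
    have "morph h X = p @ take a u @ drop a (take tc u)" using mk pa2 X_def by simp
    then have "p @ w1 = morph h X" using tt w1_def by simp
    have "take k \<sigma>2 = take (min k (gb - ga)) (drop ga \<eta>)"
      unfolding \<sigma>2_def by (simp add: drop_take)
    then have "X = take (ga + min k (gb - ga)) \<eta>" unfolding X_def by (simp add: take_add)
    then obtain Z where Z: "\<eta> = X @ Z" by (metis append_take_drop_id)
    have "morph h \<eta> = morph h X @ morph h Z" using Z by simp
    then have "(p @ w1) @ w2 @ s = morph h X @ morph h Z" using G u12 by simp
    then have "w2 @ s = morph h Z" using \<open>p @ w1 = morph h X\<close> by simp
    then show False using nw \<open>p @ w1 = morph h X\<close> wstar_iff by metis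
  qed
  show ?thesis
  proof (cases "\<exists>a\<le>tc. CC a")
    case False
    show ?thesis
    proof (intro exI conjI allI impI)
      show "p1 @ w1 @ (w2 @ s1) = morph h \<zeta>" using F u12 by simp
      show "p @ w1 @ (w2 @ s) = morph h \<eta>" using G u12 by simp
      show "length u div 2 \<le> length w1 + M" using lw1 tc1 by simp
      fix t j1 j2
      assume "t \<le> length w1" "length (morph h (take j1 \<zeta>)) = length p1 + t"
        "length (morph h (take j2 \<eta>)) = length p + t"
      then show False using False CC_def lw1 by blast
    qed
  next
    case True
    then obtain a where aa: "a \<le> tc" "CC a" by blast
    show ?thesis
    proof (intro exI conjI allI impI)
      show "(p1 @ w1) @ w2 @ s1 = morph h \<zeta>" using F u12 by simp
      show "(p @ w1) @ w2 @ s = morph h \<eta>" using G u12 by simp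
      show "length u div 2 \<le> length w2 + M" using tc2 w2_def by simp
      fix t j1 j2
      assume as: "t \<le> length w2" "length (morph h (take j1 \<zeta>)) = length (p1 @ w1) + t"
        "length (morph h (take j2 \<eta>)) = length (p @ w1) + t"
      then have "CC (tc + t)" using CC_def lw1 by (auto simp: add.assoc)
      moreover have "tc + t \<le> length u" using as(1) w2_def tcu by simp
      ultimately show False using claim[OF aa, of "tc + t"] by simp
    qed
  qed
qed

end



lemma per_mod:
  fixes x :: "nat \<Rightarrow> 'b"
  assumes per: "\<forall>t<n. x (a+t) = x (a+q+t)" and q: "0 < q"
  shows "i < q + n \<Longrightarrow> x (a + i) = x (a + i mod q)"
proof (induction i rule: less_induct)
  case (less i)
  show ?case
  proof (cases "i < q")
    case True then show ?thesis by simp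
  next
    case False
    then have "i - q < i" "i - q < n" using q less.prems by auto
    then have "x (a + (i - q)) = x (a + (i - q) mod q)" using less.IH less.prems by simp
    moreover have "x (a + i) = x (a + (i - q))" using per \<open>i - q < n\<close> False
      by (metis add.assoc le_add_diff_inverse not_less add.commute)
    moreover have "(i - q) mod q = i mod q" using False le_mod_geq[of q i] by simp
    ultimately show ?thesis by simp
  qed
qed

lemma exp_ge:
  fixes x :: "nat \<Rightarrow> 'b"
  assumes per: "\<forall>t<n. x (a+t) = x (a+q+t)" and q: "0 < q"
  shows "ereal (real (q + n) / real q) \<le> Sup (Exp ` Fact (q + n) x)"
proof -
  define y where "y = map x [a..<a + (q+n)]"
  define v where "v = take q y"
  define r :: rat where "r = of_nat (q+n) / of_nat q"
  have lv: "length v = q" using v_def y_def by simp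
  have "is_power y v r"
    unfolding is_power_def
  proof (intro conjI allI impI)
    show "v \<noteq> []" using lv q by auto
    show "of_rat r * real (length v) = real (length y)"
      using lv q y_def r_def by (simp add: of_rat_divide of_rat_add)
    fix i assume i: "i < length y"
    then have "y ! i = x (a + i)" using y_def by simp
    also have "\<dots> = x (a + i mod q)" using per_mod[OF per q] i y_def by simp
    also have "\<dots> = v ! (i mod q)"
    proof -
      have "i mod q < q" using q by simp
      then show ?thesis using v_def y_def by simp
    qed
    finally show "y ! i = v ! (i mod length v)" using lv by simp
  qed
  then have "ereal (of_rat r) \<le> Exp y" unfolding Exp_def by (intro Sup_upper) blast
  moreover have "Exp y \<le> Sup (Exp ` Fact (q + n) x)"
    by (intro Sup_upper imageI) (auto simp: Fact_def y_def)
  moreover have "of_rat r = real (q + n) / real q" using r_def by (simp add: of_rat_divide of_rat_add)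
  ultimately show ?thesis by simp
qed

lemma ACE_inf:
  assumes H: "\<And>D. \<exists>a q n. 1 \<le> q \<and> q \<le> Qb \<and> D \<le> n \<and> (\<forall>t<n. x (a+t) = x (a+q+t))"
  shows "ACE x = \<infinity>"
proof -
  have "(SUP m\<in>{N..}. Sup (Exp ` Fact m x)) = \<infinity>" for N
    unfolding top_ereal_def[symmetric] SUP_eq_top_iff
  proof (intro allI impI)
    fix y :: ereal assume "y < top"
    obtain E :: nat where E: "y < ereal (real E)"
    proof (cases y)
      case (real r)
      have "r < real (nat \<lceil>r\<rceil> + 1)" using real_nat_ceiling_ge[of r] by simp
      then show ?thesis using real by (intro that[of "nat \<lceil>r\<rceil> + 1"]) simp
    next
      case PInf then show ?thesis using \<open>y < top\<close> by simp
    next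
      case MInf then show ?thesis using that[of 0] by simp
    qed
    obtain a q n where aqn: "1 \<le> q" "q \<le> Qb" "E * Qb + N \<le> n" "\<forall>t<n. x (a+t) = x (a+q+t)"
      using H[of "E * Qb + N"] by blast
    have "real E \<le> real (q + n) / real q"
    proof -
      have "real E * real q \<le> real E * real Qb" using aqn(2) by (simp add: mult_left_mono)
      also have "\<dots> \<le> real (q + n)" using aqn(3) by (simp add: of_nat_mult[symmetric] del: of_nat_mult)
      finally show ?thesis using aqn(1) by (simp add: field_simps)
    qed
    then have "ereal (real E) \<le> ereal (real (q + n) / real q)" by simp
    also have "\<dots> \<le> Sup (Exp ` Fact (q + n) x)" using exp_ge[OF aqn(4)] aqn(1) by simp
    finally have "y < Sup (Exp ` Fact (q + n) x)" using E by (rule less_le_trans[rotated])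
    moreover have "q + n \<in> {N..}" using aqn(3) by simp
    ultimately show "\<exists>i\<in>{N..}. y < Sup (Exp ` Fact i x)" by blast
  qed
  then show ?thesis unfolding ACE_def limsup_INF_SUP by simp
qed


lemma W_nth:
  assumes ne: "\<And>a. h a \<noteq> []" and t: "t < length (morph h (map w [0..<n]))"
  shows "morph_inf h w t = morph h (map w [0..<n]) ! t"
proof (cases "n \<le> Suc t")
  case True
  then have "[0..<Suc t] = [0..<n] @ [n..<Suc t]" using upt_add_eq_append[of 0 n "Suc t - n"] by simp
  then have e: "morph h (map w [0..<Suc t]) = morph h (map w [0..<n]) @ morph h (map w [n..<Suc t])"
    by (simp only: map_append morph_simps(3))
  show ?thesis unfolding morph_inf_def e by (rule nth_append_left[OF t])
next
  case False
  then have "[0..<n] = [0..<Suc t] @ [Suc t..<n]" using upt_add_eq_append[of 0 "Suc t" "n - Suc t"] by simp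
  then have e2: "morph h (map w [0..<n]) = morph h (map w [0..<Suc t]) @ morph h (map w [Suc t..<n])"
    by (simp only: map_append morph_simps(3))
  have "length (map w [0..<Suc t]) \<le> length (morph h (map w [0..<Suc t]))" by (rule len_morph_ge[OF ne])
  then have "t < length (morph h (map w [0..<Suc t]))" by (simp only: length_map length_upt)
  then show ?thesis unfolding morph_inf_def e2 by (rule nth_append_left[symmetric])
qed

lemma factor_parse:
  assumes ne: "\<And>a. h a \<noteq> []" and u: "u = map (morph_inf h w) [a..<a+L]"
  shows "\<exists>p1 s1. p1 @ u @ s1 = morph h (map w [0..<a+L])"
proof -
  define z where "z = morph h (map w [0..<a+L])"
  have "length (map w [0..<a+L]) \<le> length z" unfolding z_def by (rule len_morph_ge[OF ne])
  then have lz: "a + L \<le> length z" by (simp only: length_map length_upt)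
  have "u = take L (drop a z)"
  proof (rule nth_equalityI)
    show "length u = length (take L (drop a z))" using u lz by simp
    fix i assume "i < length u"
    then have i: "i < L" using u by simp
    then have "u ! i = morph_inf h w (a + i)" using u by simp
    also have "\<dots> = z ! (a + i)" using W_nth[OF ne, where t="a+i" and w=w and n="a+L"] z_def lz i by simp
    finally show "u ! i = take L (drop a z) ! i" using i lz by simp
  qed
  then have "take a z @ u @ drop L (drop a z) = z" by (simp only: append_take_drop_id)
  then show ?thesis using z_def by blast
qed

lemma W_per:
  assumes ne: "\<And>a. h a \<noteq> []" and Mb: "\<And>a. length (h a) \<le> M"
    and per: "\<forall>i<I. w (k+i) = w (k+q+i)" and q: "1 \<le> q"
  shows "\<exists>a Q n. 1 \<le> Q \<and> Q \<le> q*M \<and> I \<le> n \<and> (\<forall>t<n. morph_inf h w (a+t) = morph_inf h w (a+Q+t))"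
proof -
  define seg1 where "seg1 = map w [k..<k+I]"
  define seg2 where "seg2 = map w [k+q..<k+q+I]"
  define mid where "mid = map w [k..<k+q]"
  define pre where "pre = map w [0..<k]"
  have s12: "seg1 = seg2" unfolding seg1_def seg2_def
    by (rule nth_equalityI) (use per in \<open>auto simp: add.assoc\<close>)
  have e1: "map w [0..<k+I] = pre @ seg1" unfolding seg1_def pre_def
    using upt_add_eq_append[of 0 k I] by simp
  have e2: "map w [0..<k+q+I] = (pre @ mid) @ seg2" unfolding seg2_def pre_def mid_def
    using upt_add_eq_append[of 0 "k+q" I] upt_add_eq_append[of 0 k q] by simp
  define a where "a = length (morph h pre)"
  define Q where "Q = length (morph h mid)"
  define n where "n = length (morph h seg1)"
  have m1: "morph h (map w [0..<k+I]) = morph h pre @ morph h seg1" by (simp only: e1 morph_simps(3))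
  have m2: "morph h (map w [0..<k+q+I]) = (morph h pre @ morph h mid) @ morph h seg1"
    by (simp only: e2 morph_simps(3) s12)
  have lmid: "length mid = q" unfolding mid_def by simp
  have lseg: "length seg1 = I" unfolding seg1_def by simp
  show ?thesis
  proof (intro exI conjI allI impI)
    have "length mid \<le> length (morph h mid)" by (rule len_morph_ge[OF ne])
    then show "1 \<le> Q" using q lmid Q_def by simp
    have "length (morph h mid) \<le> M * length mid" by (rule len_morph_le[OF Mb])
    then show "Q \<le> q*M" using lmid Q_def by (simp add: mult.commute)
    have "length seg1 \<le> length (morph h seg1)" by (rule len_morph_ge[OF ne])
    then show "I \<le> n" using lseg n_def by simp
    fix t assume t: "t < n"
    have t1: "a + t < length (morph h (map w [0..<k+I]))" using m1 t a_def n_def by simp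
    have "morph_inf h w (a+t) = morph h (map w [0..<k+I]) ! (a+t)" by (rule W_nth[OF ne t1])
    also have "\<dots> = morph h seg1 ! t" unfolding m1 a_def by (rule nth_append_length_plus)
    finally have l: "morph_inf h w (a+t) = morph h seg1 ! t" .
    have t2: "a + Q + t < length (morph h (map w [0..<k+q+I]))" using m2 t a_def n_def Q_def by simp
    have "morph_inf h w (a+Q+t) = morph h (map w [0..<k+q+I]) ! (a+Q+t)" by (rule W_nth[OF ne t2])
    also have "\<dots> = morph h seg1 ! t" unfolding m2 a_def Q_def
      by (metis length_append nth_append_length_plus)
    finally show "morph_inf h w (a+t) = morph_inf h w (a+Q+t)" using l by simp
  qed
qed

lemma PP_eq_app:
  assumes all: "\<forall>i. PP h c i = PP h d i" and ne: "h c \<noteq> []" "h d \<noteq> []"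
    and t: "t < length (h c) + length (h d)"
  shows "(h c @ h d) ! t = PP h c t"
proof (cases "t < length (h c)")
  case True then show ?thesis by (simp add: nth_append PP_def)
next
  case False
  then have "(h c @ h d) ! t = h d ! (t - length (h c))" by (simp add: nth_append)
  also have "\<dots> = PP h d (t - length (h c))" using t False by (simp add: PP_def)
  also have "\<dots> = PP h c (t - length (h c))" using all by simp
  also have "\<dots> = PP h c t" unfolding PP_def using False le_mod_geq[of "length (h c)" t] by simp
  finally show ?thesis .
qed





theorem lemma29:
  fixes h :: "'a::finite \<Rightarrow> 'b::finite list" and w :: "nat \<Rightarrow> 'a"
  assumes "card (UNIV :: 'a set) = 2"
    and "inj (morph h)"
    and "\<exists>f :: nat \<Rightarrow> 'b list.
           (\<forall>i. is_factor (f i) (morph_inf h w) \<and> \<not> sync_word (range h) (f i)) \<and>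
           filterlim (\<lambda>i. length (f i)) at_top sequentially"
  shows "ACE (morph_inf h w) = \<infinity> \<and> ACE w = \<infinity>"
proof -
  obtain f :: "nat \<Rightarrow> 'b list" where f: "\<And>i. is_factor (f i) (morph_inf h w)"
    "\<And>i. \<not> sync_word (range h) (f i)" "filterlim (\<lambda>i. length (f i)) at_top sequentially"
    using assms(3) by blast
  have ne: "\<And>a. h a \<noteq> []" using inj_morph_ne[OF assms(2)] .
  obtain a0 b0 :: 'a where ab: "UNIV = {a0, b0}" "a0 \<noteq> b0" using assms(1) card_2_iff by metis
  have ex: "\<exists>i. PP h a0 i \<noteq> PP h b0 i"
  proof (rule ccontr)
    assume "\<not> ?thesis"
    then have all: "\<forall>i. PP h a0 i = PP h b0 i" by simp
    then have all': "\<forall>i. PP h b0 i = PP h a0 i" by simp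
    have "h a0 @ h b0 = h b0 @ h a0"
    proof (rule nth_equalityI)
      show "length (h a0 @ h b0) = length (h b0 @ h a0)" by simp
      fix t assume "t < length (h a0 @ h b0)"
      then show "(h a0 @ h b0) ! t = (h b0 @ h a0) ! t"
        using PP_eq_app[OF all ne ne, of t] PP_eq_app[OF all' ne ne, of t] all by simp
    qed
    then have "morph h [a0, b0] = morph h [b0, a0]" by simp
    then have "[a0, b0] = [b0, a0]" using assms(2) by (meson injD)
    then show False using ab by simp
  qed
  define m where "m = (LEAST i. PP h a0 i \<noteq> PP h b0 i)"
  have m1: "PP h a0 m \<noteq> PP h b0 m" using LeastI_ex[OF ex] m_def by simp
  have m2: "i < m \<Longrightarrow> PP h a0 i = PP h b0 i" for i using not_less_Least[of i] m_def by blast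
  define M where "M = Max (range (\<lambda>a. length (h a)))"
  interpret B: bincode h m M
  proof
    show "h a \<noteq> []" for a by (rule ne)
    show "inj (morph h)" by (rule assms(2))
    show "PP h c i = PP h d i" if "c \<noteq> d" "i < m" for c d i
    proof -
      have "(c = a0 \<and> d = b0) \<or> (c = b0 \<and> d = a0)" using that ab by (metis UNIV_I insertE singletonD)
      then show ?thesis using m2[OF that(2)] by auto
    qed
    show "PP h c m \<noteq> PP h d m" if "c \<noteq> d" for c d
    proof -
      have "(c = a0 \<and> d = b0) \<or> (c = b0 \<and> d = a0)" using that ab by (metis UNIV_I insertE singletonD)
      then show ?thesis using m1 by auto
    qed
    show "length (h a) \<le> M" for a unfolding M_def by (rule Max_ge) auto
    show "card (UNIV :: 'a set) = 2" by (rule assms(1))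
  qed
  define C where "C = M * (2*M + 2) + m + 1"
  have perw: "\<exists>k q I. 1 \<le> q \<and> q \<le> 2*M \<and> D \<le> I \<and> (\<forall>i<I. w (k+i) = w (k+q+i))" for D
  proof -
    have "eventually (\<lambda>i. 2 * (M*D + C + M + 1) \<le> length (f i)) sequentially"
      using f(3) by (simp add: filterlim_at_top)
    then obtain i where li: "2 * (M*D + C + M + 1) \<le> length (f i)"
      by (auto simp: eventually_sequentially)
    define u where "u = f i"
    obtain a where ua: "u = map (morph_inf h w) [a..<a + length u]" using f(1)[of i] u_def is_factor_def by blast
    obtain p1 s1 where F: "p1 @ u @ s1 = morph h (map w [0..<a + length u])"
      using factor_parse[OF ne ua] by blast
    have lu: "2*M \<le> length u" using li u_def by simp
    obtain u' p1' s1' p2' s2' \<eta> where sp: "p1' @ u' @ s1' = morph h (map w [0..<a + length u])"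
      "p2' @ u' @ s2' = morph h \<eta>"
      "\<forall>t j1 j2. t \<le> length u' \<longrightarrow> length (morph h (take j1 (map w [0..<a + length u]))) = length p1' + t \<longrightarrow>
         length (morph h (take j2 \<eta>)) = length p2' + t \<longrightarrow> False" "length u div 2 \<le> length u' + M"
    proof -
      have ns: "\<not> sync_word (range h) u" using f(2) u_def by simp
      show ?thesis using B.split_nonsync[OF F ns lu] by (elim exE conjE) (rule that; assumption)
    qed
    have lu': "M*D + C + 1 \<le> length u'" using sp(4) li u_def by simp
    then have big: "M * (2*M + 2) + m + 1 < length u'" using C_def by simp
    obtain k q I where kq: "1 \<le> q" "q \<le> 2*M" "k + q + I \<le> length (map w [0..<a + length u])"
      "\<forall>i<I. map w [0..<a + length u] ! (k+i) = map w [0..<a + length u] ! (k+q+i)"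
      "length u' \<le> M*I + M*(2*M+2) + m + 1"
    proof -
      have ex: "\<exists>k q I. 1 \<le> q \<and> q \<le> 2*M \<and> k + q + I \<le> length (map w [0..<a + length u]) \<and>
        (\<forall>i<I. map w [0..<a + length u] ! (k+i) = map w [0..<a + length u] ! (k+q+i)) \<and>
        length u' \<le> M*I + M*(2*M+2) + m + 1"
        apply (rule B.core[OF sp(1) sp(2) _ big])
        using sp(3) by blast
      from ex show ?thesis by (elim exE conjE) (rule that; assumption)
    qed
    have "M*D < M*I" using kq(5) lu' C_def by linarith
    then have "D \<le> I" by (simp add: less_imp_le)
    moreover have "\<forall>i<I. w (k+i) = w (k+q+i)"
    proof (intro allI impI)
      fix i assume "i < I"
      then have "k + i < a + length u" "k + q + i < a + length u" using kq(3) by auto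
      then have "map w [0..<a + length u] ! (k+i) = w (k+i)" "map w [0..<a + length u] ! (k+q+i) = w (k+q+i)"
        by auto
      then show "w (k+i) = w (k+q+i)" using kq(4) \<open>i < I\<close> by metis
    qed
    ultimately show ?thesis using kq(1,2) by blast
  qed
  have "ACE w = \<infinity>"
    by (rule ACE_inf[where Qb = "2*M"]) (use perw in blast)
  moreover have "ACE (morph_inf h w) = \<infinity>"
  proof (rule ACE_inf[where Qb = "2*M*M"])
    fix D
    obtain k q I where kq: "1 \<le> q" "q \<le> 2*M" "D \<le> I" "\<forall>i<I. w (k+i) = w (k+q+i)" using perw by blast
    obtain a Q n where aQ: "1 \<le> Q" "Q \<le> q*M" "I \<le> n" "\<forall>t<n. morph_inf h w (a+t) = morph_inf h w (a+Q+t)"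
      using W_per[where h=h and M=M and w=w and I=I and k=k and q=q, OF ne B.Mb kq(4) kq(1)] by blast
    have "Q \<le> 2*M*M" using aQ(2) kq(2) by (meson le_trans mult_le_mono1)
    then show "\<exists>a Q n. 1 \<le> Q \<and> Q \<le> 2*M*M \<and> D \<le> n \<and> (\<forall>t<n. morph_inf h w (a+t) = morph_inf h w (a+Q+t))"
      using aQ kq(3) by (meson le_trans)
  qed
  ultimately show ?thesis by simp
qed


end
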